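(* Let $n\ge2$. For all $x,y\in\mathbb{B}^n$, $$\tfrac14\rho_{\mathbb{B}^n}(x,y)\le\tilde\tau_{\mathbb{B}^n}(x,y)\le\rho_{\mathbb{B}^n}(x,y)\quad\text{and}\quad \tilde\tau_{\mathbb{B}^n}(x,y)\le\tfrac12\rho_{\mathbb{B}^n}(x,y)+\log\tfrac54,$$ and all these inequalities are sharp: $$\inf_{x\ne y}\frac{\tilde\tau_{\mathbb{B}^n}(x,y)}{\rho_{\mathbb{B}^n}(x,y)}=\tfrac14,\qquad \sup_{x\ne y}\frac{\tilde\tau_{\mathbb{B}^n}(x,y)}{\rho_{\mathbb{B}^n}(x,y)}=1,\qquad \sup_{x,y\in\mathbb{B}^n}\Big(\tilde\tau_{\mathbb{B}^n}(x,y)-\tfrac12\rho_{\mathbb{B}^n}(x,y)\Big)=\log\tfrac54.$$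
   Context: $\mathbb{B}^n=\{z\in\mathbb{R}^n:|z|<1\}$. The hyperbolic metric $\rho_{\mathbb{B}^n}$ is given by $\sinh\frac{\rho_{\mathbb{B}^n}(x,y)}{2}=\frac{|x-y|}{\sqrt{1-|x|^2}\sqrt{1-|y|^2}}$. For a proper subdomain $D\subsetneq\mathbb{R}^n$ and $x,y\in D$, $\tilde\tau_D(x,y)=\log\big(1+\sup_{p\in\partial D}\frac{|x-y|}{\sqrt{|x-p||y-p|}}\big)$ (the scale invariant Cassinian metric). *)

theory Defs
  imports "HOL-Analysis.Analysis"
begin

text \<open>Unit ball B^n = ball 0 1 in a Euclidean space of dimension n = DIM('a).\<close>

definition hyp_ball :: "'a::euclidean_space \<Rightarrow> 'a \<Rightarrow> real" where
  "hyp_ball x y = 2 * arsinh (norm (x - y) / (sqrt (1 - (norm x)\<^sup>2) * sqrt (1 - (norm y)\<^sup>2)))"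

definition cass_si :: "'a::euclidean_space set \<Rightarrow> 'a \<Rightarrow> 'a \<Rightarrow> real" where
  "cass_si D x y = ln (1 + (SUP p\<in>frontier D. norm (x - y) / sqrt (norm (x - p) * norm (y - p))))"

end

theory Submission
  imports Defs "HOL-Real_Asymp.Real_Asymp"
begin


definition sB :: "'a::euclidean_space \<Rightarrow> 'a \<Rightarrow> real" where
  "sB x y = (SUP p\<in>sphere 0 1. norm (x - y) / sqrt (norm (x - p) * norm (y - p)))"

definition aB :: "'a::euclidean_space \<Rightarrow> 'a \<Rightarrow> real" where
  "aB x y = norm (x - y) / (sqrt (1 - (norm x)\<^sup>2) * sqrt (1 - (norm y)\<^sup>2))"

lemma cass_eq: "cass_si (ball (0::'a::euclidean_space) 1) x y = ln (1 + sB x y)"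
  unfolding cass_si_def sB_def by simp

lemma hyp_eq: "hyp_ball x y = 2 * arsinh (aB x y)"
  unfolding hyp_ball_def aB_def by simp

lemma unit_exists: "\<exists>e::'a::euclidean_space. norm e = 1"
proof -
  obtain b :: 'a where "b \<in> Basis" using nonempty_Basis by blast
  then show ?thesis using norm_Basis by blast
qed

lemma sphere_ne: "sphere (0::'a::euclidean_space) 1 \<noteq> {}"
  using unit_exists by auto

lemma dist_sphere:
  fixes x p :: "'a::euclidean_space"
  assumes "norm x < 1" "norm p = 1"
  shows "1 - norm x \<le> norm (x - p)"
  using norm_triangle_ineq2[of p x] assms by (simp add: norm_minus_commute)

lemma sq_pos: "norm (x::'a::euclidean_space) < 1 \<Longrightarrow> 0 < 1 - (norm x)\<^sup>2"
  using abs_square_less_1[of "norm x"] by simp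

lemma pt_bound:
  fixes x y p :: "'a::euclidean_space"
  assumes x: "norm x < 1" and y: "norm y < 1" and p: "norm p = 1"
  shows "norm (x - y) / sqrt (norm (x - p) * norm (y - p)) \<le> 2 * aB x y"
proof -
  have hx: "1 - norm x \<le> norm (x - p)" using dist_sphere x p .
  have hy: "1 - norm y \<le> norm (y - p)" using dist_sphere y p .
  have ax: "0 < 1 - norm x" using x by simp
  have ay: "0 < 1 - norm y" using y by simp
  have e1: "1 - (norm x)\<^sup>2 \<le> 2 * (1 - norm x)"
  proof -
    have "0 \<le> (1 - norm x)\<^sup>2" by simp
    thus ?thesis by (simp add: power2_eq_square algebra_simps)
  qed
  have e2: "1 - (norm y)\<^sup>2 \<le> 2 * (1 - norm y)"
  proof -
    have "0 \<le> (1 - norm y)\<^sup>2" by simp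
    thus ?thesis by (simp add: power2_eq_square algebra_simps)
  qed
  have px: "0 < 1 - (norm x)\<^sup>2" using sq_pos x .
  have py: "0 < 1 - (norm y)\<^sup>2" using sq_pos y .
  have "(1 - (norm x)\<^sup>2) * (1 - (norm y)\<^sup>2) \<le> (2 * (1 - norm x)) * (2 * (1 - norm y))"
    using e1 e2 px py by (intro mult_mono) auto
  also have "\<dots> = 4 * ((1 - norm x) * (1 - norm y))" by (simp add: algebra_simps)
  also have "\<dots> \<le> 4 * (norm (x - p) * norm (y - p))"
    using hx hy ax ay by (intro mult_left_mono mult_mono) auto
  finally have "sqrt ((1 - (norm x)\<^sup>2) * (1 - (norm y)\<^sup>2)) \<le> sqrt (4 * (norm (x - p) * norm (y - p)))"
    using real_sqrt_le_mono by blast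
  hence le: "sqrt (1 - (norm x)\<^sup>2) * sqrt (1 - (norm y)\<^sup>2) \<le> 2 * sqrt (norm (x - p) * norm (y - p))"
    by (simp add: real_sqrt_mult)
  have pos: "0 < sqrt (1 - (norm x)\<^sup>2) * sqrt (1 - (norm y)\<^sup>2)" using px py by simp
  have pp: "0 < sqrt (norm (x - p) * norm (y - p))" using hx hy ax ay
    by (intro real_sqrt_gt_zero mult_pos_pos) linarith+
  have "norm (x - y) / sqrt (norm (x - p) * norm (y - p)) = 2 * norm (x - y) / (2 * sqrt (norm (x - p) * norm (y - p)))"
    by simp
  also have "\<dots> \<le> 2 * norm (x - y) / (sqrt (1 - (norm x)\<^sup>2) * sqrt (1 - (norm y)\<^sup>2))"
    using le pos pp by (intro divide_left_mono) auto
  finally show ?thesis unfolding aB_def by simp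
qed

lemma bdd:
  fixes x y :: "'a::euclidean_space"
  assumes "norm x < 1" "norm y < 1"
  shows "bdd_above ((\<lambda>p. norm (x - y) / sqrt (norm (x - p) * norm (y - p))) ` sphere 0 1)"
  using pt_bound[OF assms] by (intro bdd_aboveI2) auto

lemma sB_le:
  fixes x y :: "'a::euclidean_space"
  assumes "norm x < 1" "norm y < 1"
  shows "sB x y \<le> 2 * aB x y"
  unfolding sB_def using pt_bound[OF assms] sphere_ne by (intro cSUP_least) auto

lemma sB_ge:
  fixes x y p :: "'a::euclidean_space"
  assumes "norm x < 1" "norm y < 1" "norm p = 1"
  shows "norm (x - y) / sqrt (norm (x - p) * norm (y - p)) \<le> sB x y"
  unfolding sB_def using bdd[OF assms(1,2)] assms(3) by (intro cSUP_upper) auto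

lemma sB_nonneg:
  fixes x y :: "'a::euclidean_space"
  assumes "norm x < 1" "norm y < 1"
  shows "0 \<le> sB x y"
proof -
  obtain e :: 'a where "norm e = 1" using unit_exists by blast
  from sB_ge[OF assms this] show ?thesis by (smt (verit) divide_nonneg_nonneg norm_ge_zero real_sqrt_ge_zero mult_nonneg_nonneg)
qed


lemma aB_nonneg: "norm (x::'a::euclidean_space) < 1 \<Longrightarrow> norm y < 1 \<Longrightarrow> 0 \<le> aB x y"
  unfolding aB_def using sq_pos[of x] sq_pos[of y] by simp

lemma sB_sym: "sB x y = sB y x"
  unfolding sB_def by (simp add: norm_minus_commute mult.commute)

lemma aB_sym: "aB x y = aB y x"
  unfolding aB_def by (simp add: norm_minus_commute mult.commute)

lemma key_real:
  fixes a b d m :: real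
  assumes a: "0 < a" and ab: "a \<le> b" and b1: "b \<le> 1" and d: "0 < d" and bad: "b \<le> a + d"
    and m: "m = min (2 - b) (a + d)"
  shows "d / (sqrt (a * (2 - a)) * sqrt (b * (2 - b))) \<le> d / sqrt (a * m) + (d / sqrt (a * m))\<^sup>2 / 2"
proof -
  define \<sigma> where "\<sigma> = sqrt (a * m)"
  define \<alpha> where "\<alpha> = sqrt (a * (2 - a)) * sqrt (b * (2 - b))"
  have mpos: "0 < m" using m a d b1 by auto
  have sp: "0 < \<sigma>" unfolding \<sigma>_def using a mpos by simp
  have s2: "\<sigma>\<^sup>2 = a * m" unfolding \<sigma>_def using a mpos by simp
  have ap: "0 < \<alpha>" unfolding \<alpha>_def using a ab b1 by (intro mult_pos_pos) auto
  have main: "2 * \<sigma>\<^sup>2 \<le> \<alpha> * (2 * \<sigma> + d)"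
  proof (cases "2 - b \<le> a + d")
    case True
    hence mm: "m = 2 - b" using m by simp
    define \<beta> where "\<beta> = sqrt ((2 - a) * b)"
    have bp: "0 \<le> \<beta>" unfolding \<beta>_def using a ab b1 by simp
    have al: "\<alpha> = \<sigma> * \<beta>" unfolding \<alpha>_def \<sigma>_def \<beta>_def mm
      by (simp add: real_sqrt_mult[symmetric] algebra_simps)
    have sb: "\<sigma> \<le> \<beta>" unfolding \<sigma>_def \<beta>_def mm
      using ab a by (intro real_sqrt_le_mono) (simp add: algebra_simps)
    have bb: "b \<le> \<beta>" unfolding \<beta>_def using ab a b1
      by (intro real_le_rsqrt) (simp add: power2_eq_square mult_right_mono)
    have "2 * \<sigma> * (1 - \<beta>) \<le> \<beta> * d"
    proof (cases "\<beta> \<le> 1")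
      case True
      have "2 * \<sigma> * (1 - \<beta>) \<le> 2 * \<beta> * (1 - \<beta>)" using sb True by (intro mult_right_mono) auto
      also have "\<dots> \<le> \<beta> * (2 - a - b)"
      proof -
        have "2 * (1 - \<beta>) \<le> 2 - a - b" using ab bb by (simp add: algebra_simps)
        from mult_left_mono[OF this bp] show ?thesis by (simp add: algebra_simps)
      qed
      also have "\<dots> \<le> \<beta> * d" using bp \<open>2 - b \<le> a + d\<close> by (intro mult_left_mono) auto
      finally show ?thesis by (simp add: mult.assoc)
    next
      case False
      have "2 * \<sigma> * (1 - \<beta>) \<le> 0" using sp False by (intro mult_nonneg_nonpos) auto
      moreover have "0 \<le> \<beta> * d" using bp d by simp
      ultimately show ?thesis by linarith
    qed
    hence "2 * \<sigma> \<le> \<beta> * (2 * \<sigma> + d)" by (simp add: algebra_simps)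
    hence "\<sigma> * (2 * \<sigma>) \<le> \<sigma> * (\<beta> * (2 * \<sigma> + d))" using sp by (intro mult_left_mono) auto
    thus ?thesis unfolding al by (simp add: power2_eq_square algebra_simps)
  next
    case False
    hence mm: "m = a + d" using m by simp
    define c where "c = a + d"
    define w where "w = 2 - a"
    have cw: "c \<le> w" unfolding c_def w_def using False ab by simp
    have ac: "a \<le> c" unfolding c_def using d by simp
    have aw: "a \<le> w" unfolding w_def using ab b1 by simp
    have s2': "\<sigma>\<^sup>2 = a * c" using s2 mm c_def by simp
    have q: "a * (w + c)\<^sup>2 \<le> 4 * c * w\<^sup>2"
    proof -
      have id: "4 * c * w\<^sup>2 - a * (w + c)\<^sup>2 = a * (c - a) * (w - c) + (4 * w + a) * (w - a) * (c - a) + a * (3 * w + a) * (w - a)"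
        unfolding w_def by (simp add: power2_eq_square algebra_simps)
      have "0 \<le> a * (c - a) * (w - c)" using a ac cw by simp
      moreover have "0 \<le> (4 * w + a) * (w - a) * (c - a)" using a ac aw by simp
      moreover have "0 \<le> a * (3 * w + a) * (w - a)" using a aw by simp
      ultimately show ?thesis using id by linarith
    qed
    have "(a * (w + c))\<^sup>2 \<le> (2 * \<sigma> * w)\<^sup>2"
    proof -
      have "(a * (w + c))\<^sup>2 = a * (a * (w + c)\<^sup>2)" by (simp add: power2_eq_square algebra_simps)
      also have "\<dots> \<le> a * (4 * c * w\<^sup>2)" using q a by (intro mult_left_mono) auto
      also have "\<dots> = (2 * \<sigma> * w)\<^sup>2" using s2' by (simp add: power_mult_distrib algebra_simps)
      finally show ?thesis .
    qed
    moreover have "0 \<le> 2 * \<sigma> * w" using sp aw a by simp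
    ultimately have h1: "a * (w + c) \<le> 2 * \<sigma> * w" by (rule power2_le_imp_le)
    have h2: "2 * c \<le> w * (2 * \<sigma> + d)" using h1 unfolding c_def w_def by (simp add: algebra_simps)
    have aa: "a * (2 - a) \<le> \<alpha>"
    proof -
      have "b * (2 - b) - a * (2 - a) = (b - a) * (2 - a - b)" by (simp add: algebra_simps)
      moreover have "0 \<le> (b - a) * (2 - a - b)" using ab b1 a by (intro mult_nonneg_nonneg) auto
      ultimately have "a * (2 - a) \<le> b * (2 - b)" by linarith
      hence "sqrt (a * (2 - a)) * sqrt (a * (2 - a)) \<le> \<alpha>" unfolding \<alpha>_def using a ab b1
        by (intro mult_left_mono real_sqrt_le_mono) auto
      thus ?thesis using a ab b1 by simp
    qed
    have "2 * \<sigma>\<^sup>2 = a * (2 * c)" using s2' by simp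
    also have "\<dots> \<le> a * (w * (2 * \<sigma> + d))" using h2 a by (intro mult_left_mono) auto
    also have "\<dots> = (a * (2 - a)) * (2 * \<sigma> + d)" unfolding w_def by simp
    also have "\<dots> \<le> \<alpha> * (2 * \<sigma> + d)" using aa sp d by (intro mult_right_mono) auto
    finally show ?thesis .
  qed
  have "d / \<alpha> \<le> d / \<sigma> + (d / \<sigma>)\<^sup>2 / 2"
  proof -
    have "d / \<sigma> + (d / \<sigma>)\<^sup>2 / 2 = d * (2 * \<sigma> + d) / (2 * \<sigma>\<^sup>2)" using sp
      by (simp add: field_simps power2_eq_square)
    moreover have "d / \<alpha> \<le> d * (2 * \<sigma> + d) / (2 * \<sigma>\<^sup>2)"
    proof -
      have "d * (2 * \<sigma>\<^sup>2) \<le> d * (\<alpha> * (2 * \<sigma> + d))" using main d by (intro mult_left_mono) auto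
      hence "d \<le> d * (\<alpha> * (2 * \<sigma> + d)) / (2 * \<sigma>\<^sup>2)" using sp by (simp add: le_divide_eq)
      also have "\<dots> = d * (2 * \<sigma> + d) / (2 * \<sigma>\<^sup>2) * \<alpha>" by simp
      finally show ?thesis using ap by (simp add: pos_divide_le_eq)
    qed
    ultimately show ?thesis by simp
  qed
  thus ?thesis unfolding \<alpha>_def \<sigma>_def .
qed

lemma lower_aux:
  fixes x y :: "'a::euclidean_space"
  assumes x: "norm x < 1" and y: "norm y < 1" and xy: "norm y \<le> norm x"
  shows "aB x y \<le> sB x y + (sB x y)\<^sup>2 / 2"
proof (cases "x = y")
  case True
  then show ?thesis using sB_nonneg[OF x y] by (simp add: aB_def)
next
  case False
  define d where "d = norm (x - y)"
  have d: "0 < d" using False unfolding d_def by simp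
  have x0: "x \<noteq> 0" using False xy by auto
  have nx: "0 < norm x" using x0 by simp
  define p where "p = (1 / norm x) *\<^sub>R x"
  have np: "norm p = 1" unfolding p_def using nx by simp
  have "x - p = (1 - 1 / norm x) *\<^sub>R x" unfolding p_def by (simp add: algebra_simps)
  hence "norm (x - p) = \<bar>1 - 1 / norm x\<bar> * norm x" by simp
  also have "\<dots> = (1 / norm x - 1) * norm x"
    using nx x by (subst abs_of_nonpos) (auto simp: field_simps)
  also have "\<dots> = 1 - norm x" using nx by (simp add: field_simps)
  finally have xp: "norm (x - p) = 1 - norm x" .
  have yp1: "norm (y - p) \<le> 1 + norm y" using norm_triangle_ineq4[of y p] np by simp
  have "norm (y - p) = norm ((y - x) + (x - p))" by simp
  also have "\<dots> \<le> norm (y - x) + norm (x - p)" by (rule norm_triangle_ineq)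
  finally have yp2: "norm (y - p) \<le> d + (1 - norm x)" unfolding d_def xp by (simp add: norm_minus_commute)
  have ypp: "0 < norm (y - p)" using dist_sphere[OF y np] y by linarith
  define a where "a = 1 - norm x"
  define b where "b = 1 - norm y"
  define m where "m = min (2 - b) (a + d)"
  have a: "0 < a" unfolding a_def using x by simp
  have ab: "a \<le> b" unfolding a_def b_def using xy by simp
  have b1: "b \<le> 1" unfolding b_def by simp
  have bad: "b \<le> a + d" unfolding a_def b_def d_def using norm_triangle_ineq3[of x y] by simp
  have K: "d / (sqrt (a * (2 - a)) * sqrt (b * (2 - b))) \<le> d / sqrt (a * m) + (d / sqrt (a * m))\<^sup>2 / 2"
    using key_real[OF a ab b1 d bad m_def] .
  have eqA: "aB x y = d / (sqrt (a * (2 - a)) * sqrt (b * (2 - b)))"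
    unfolding aB_def d_def a_def b_def by (simp add: power2_eq_square algebra_simps)
  have "0 < 1 + norm y" by (smt (verit) norm_ge_zero)
  hence mpos: "0 < m" unfolding m_def b_def using a d by simp
  have ym: "norm (y - p) \<le> m" unfolding m_def b_def a_def using yp1 yp2 by simp
  have t_le: "d / sqrt (a * m) \<le> sB x y"
  proof -
    have "d / sqrt (a * m) \<le> d / sqrt (norm (x - p) * norm (y - p))"
      unfolding xp a_def[symmetric] using a ym ypp d mpos
      by (intro divide_left_mono real_sqrt_le_mono mult_left_mono) auto
    also have "\<dots> \<le> sB x y" using sB_ge[OF x y np] unfolding d_def .
    finally show ?thesis .
  qed
  have t0: "0 \<le> d / sqrt (a * m)" using d a mpos by simp
  have "(d / sqrt (a * m))\<^sup>2 \<le> (sB x y)\<^sup>2" using t_le t0 by (intro power_mono) auto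
  thus ?thesis using K eqA t_le by linarith
qed

lemma lower:
  fixes x y :: "'a::euclidean_space"
  assumes x: "norm x < 1" and y: "norm y < 1"
  shows "aB x y \<le> sB x y + (sB x y)\<^sup>2 / 2"
proof (cases "norm y \<le> norm x")
  case True then show ?thesis using lower_aux[OF x y] by simp
next
  case False then show ?thesis using lower_aux[OF y x] by (simp add: aB_sym sB_sym)
qed

lemma ineqs:
  fixes x y :: "'a::euclidean_space"
  assumes x: "norm x < 1" and y: "norm y < 1"
  shows "hyp_ball x y / 4 \<le> cass_si (ball 0 1) x y \<and>
            cass_si (ball 0 1) x y \<le> hyp_ball x y \<and>
            cass_si (ball 0 1) x y \<le> hyp_ball x y / 2 + ln (5/4)"
proof -
  define s where "s = sB x y"
  define A where "A = aB x y"
  define q where "q = sqrt (A\<^sup>2 + 1)"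
  have s0: "0 \<le> s" unfolding s_def using sB_nonneg[OF x y] .
  have A0: "0 \<le> A" unfolding A_def using aB_nonneg[OF x y] .
  have sA: "s \<le> 2 * A" unfolding s_def A_def using sB_le[OF x y] .
  have As: "A \<le> s + s\<^sup>2 / 2" unfolding s_def A_def using lower[OF x y] .
  have q1: "1 \<le> q" unfolding q_def by simp
  have qA: "q \<le> 1 + A"
  proof -
    have "A\<^sup>2 + 1 \<le> (1 + A)\<^sup>2" using A0 by (simp add: power2_eq_square algebra_simps)
    hence "q \<le> sqrt ((1 + A)\<^sup>2)" unfolding q_def by (rule real_sqrt_le_mono)
    thus ?thesis using A0 by simp
  qed
  have qpos: "0 < A + q" using A0 q1 by simp
  have ar: "arsinh A = ln (A + q)" unfolding q_def by (simp add: arsinh_real_def)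
  have C: "cass_si (ball 0 1) x y = ln (1 + s)" unfolding s_def by (rule cass_eq)
  have H: "hyp_ball x y = 2 * ln (A + q)" unfolding A_def[symmetric] hyp_eq ar ..
  have e1: "1 + s \<le> (A + q)\<^sup>2"
  proof -
    have "(A + q)\<^sup>2 = A\<^sup>2 + 2 * A * q + q\<^sup>2" by (simp add: power2_eq_square algebra_simps)
    moreover have "q\<^sup>2 = A\<^sup>2 + 1" unfolding q_def by simp
    moreover have "A \<le> A * q" using A0 q1 by (simp add: mult_le_cancel_left1)
    moreover have "0 \<le> A\<^sup>2" by simp
    ultimately show ?thesis using sA A0 by linarith
  qed
  have e2: "A + q \<le> (1 + s)\<^sup>2" using As qA by (simp add: power2_eq_square algebra_simps)
  have e3: "1 + s \<le> 5 / 4 * (A + q)"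
  proof -
    have "(4 / 5 * (1 + 3 * A / 4))\<^sup>2 \<le> A\<^sup>2 + 1"
    proof -
      have "0 \<le> (A - 3/4)\<^sup>2" by simp
      thus ?thesis by (simp add: power2_eq_square algebra_simps)
    qed
    hence "4 / 5 * (1 + 3 * A / 4) \<le> q" unfolding q_def by (rule real_le_rsqrt)
    thus ?thesis using sA by (simp add: field_simps)
  qed
  have l1: "ln (1 + s) \<le> 2 * ln (A + q)"
  proof -
    have "ln (1 + s) \<le> ln ((A + q)\<^sup>2)" using e1 s0 by (intro ln_mono) auto
    thus ?thesis using qpos by (simp add: ln_realpow)
  qed
  have l2: "ln (A + q) \<le> 2 * ln (1 + s)"
  proof -
    have "ln (A + q) \<le> ln ((1 + s)\<^sup>2)" using e2 qpos by (intro ln_mono) auto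
    thus ?thesis using s0 by (simp add: ln_realpow)
  qed
  have l3: "ln (1 + s) \<le> ln (A + q) + ln (5/4)"
  proof -
    have "ln (1 + s) \<le> ln (5 / 4 * (A + q))" using e3 s0 by (intro ln_mono) auto
    also have "\<dots> = ln (5/4) + ln (A + q)" using ln_mult[of "5/4" "A + q"] qpos by simp
    finally show ?thesis by simp
  qed
  show ?thesis unfolding C H using l1 l2 l3 by (intro conjI) linarith+
qed


lemma lim1: "((\<lambda>r::real. ln (1 + 2*r/sqrt(1-r^2)) / (2 * arsinh (2*r/(1-r^2)))) \<longlongrightarrow> 1/4) (at_left 1)"
  unfolding arsinh_real_def by real_asymp

lemma aux1: "2 powr (1 / 2) * 2 powr (1 / 2) / 2 = (1::real)"
  by (simp add: powr_half_sqrt)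
lemma aux2: "3 * (inverse (2 powr (1 / 2)) * inverse (8 powr (1 / 2))) = (3 / 4::real)"
proof -
  have "(2::real) powr (1/2) * 8 powr (1/2) = 16 powr (1/2)" by (simp add: powr_mult[symmetric])
  also have "\<dots> = 4" by (simp add: powr_half_sqrt)
  finally show ?thesis by (simp add: inverse_mult_distrib[symmetric] field_simps)
qed
lemma lim2: "((\<lambda>h::real. ln (1 + h^2/sqrt(h*(h+h^2))) / (2 * arsinh (h^2/(sqrt(1-(1-h)^2) * sqrt(1-(1-h-h^2)^2))))) \<longlongrightarrow> 1) (at_right 0)"
  unfolding arsinh_real_def by (real_asymp simp add: aux1)
lemma lim3: "((\<lambda>u::real. 3*u/(sqrt(1-(1-u)^2) * sqrt(1-(1-4*u)^2))) \<longlongrightarrow> 3/4) (at_right 0)"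
  by (real_asymp simp add: aux2)


lemma scal_diff: "a *\<^sub>R e - b *\<^sub>R e = (a - b) *\<^sub>R (e::'a::real_vector)"
  by (simp add: scaleR_left_diff_distrib)

lemma hyp_pos:
  fixes x y :: "'a::euclidean_space"
  assumes x: "norm x < 1" and y: "norm y < 1" and xy: "x \<noteq> y"
  shows "0 < hyp_ball x y"
proof -
  have "0 < aB x y" unfolding aB_def using sq_pos[OF x] sq_pos[OF y] xy by simp
  thus ?thesis unfolding hyp_eq by simp
qed

lemma fam1:
  fixes e :: "'a::euclidean_space"
  assumes e: "norm e = 1" and r0: "0 < r" and r1: "r < 1"
  shows "cass_si (ball 0 1) (-(r *\<^sub>R e)) (r *\<^sub>R e) / hyp_ball (-(r *\<^sub>R e)) (r *\<^sub>R e)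
         \<le> ln (1 + 2*r/sqrt(1-r^2)) / (2 * arsinh (2*r/(1-r^2)))"
proof -
  define x where "x = -(r *\<^sub>R e)"
  define y where "y = r *\<^sub>R e"
  have nx: "norm x = r" unfolding x_def using e r0 by simp
  have ny: "norm y = r" unfolding y_def using e r0 by simp
  have dxy: "norm (x - y) = 2 * r"
  proof -
    have "x - y = (-r) *\<^sub>R e - r *\<^sub>R e" unfolding x_def y_def by simp
    also have "\<dots> = (-r - r) *\<^sub>R e" by (rule scal_diff)
    finally show ?thesis using e r0 by simp
  qed
  have r2: "0 < 1 - r^2" using r0 r1 by (simp add: power_less_one_iff abs_square_less_1)
  have aeq: "aB x y = 2 * r / (1 - r^2)" unfolding aB_def nx ny dxy using r2
    by (simp add: real_sqrt_mult[symmetric])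
  have sle: "sB x y \<le> 2 * r / sqrt (1 - r^2)"
    unfolding sB_def
  proof (rule cSUP_least[OF sphere_ne])
    fix p :: 'a assume "p \<in> sphere 0 1"
    hence p: "norm p = 1" by simp
    define t where "t = e \<bullet> p"
    have "\<bar>t\<bar> \<le> 1" unfolding t_def using Cauchy_Schwarz_ineq2[of e p] e p by simp
    hence t2: "t^2 \<le> 1" by (simp add: abs_square_le_1)
    have ee: "e \<bullet> e = 1" using power2_norm_eq_inner[of e] e by simp
    have pp: "p \<bullet> p = 1" using power2_norm_eq_inner[of p] p by simp
    have N1: "(norm (x - p))^2 = 1 + r^2 + 2*r*t" unfolding power2_norm_eq_inner x_def t_def
      using ee pp by (simp add: inner_simps inner_commute power2_eq_square algebra_simps)
    have N2: "(norm (y - p))^2 = 1 + r^2 - 2*r*t" unfolding power2_norm_eq_inner y_def t_def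
      using ee pp by (simp add: inner_simps inner_commute power2_eq_square algebra_simps)
    have "(norm (x - p) * norm (y - p))^2 = (1 + r^2 + 2*r*t) * (1 + r^2 - 2*r*t)"
      by (simp add: power_mult_distrib N1 N2)
    moreover have "(1 + r^2 + 2*r*t) * (1 + r^2 - 2*r*t) - (1 - r^2)^2 = 4 * r^2 * (1 - t^2)"
      by (simp add: algebra_simps power2_eq_square)
    moreover have "0 \<le> 4 * r^2 * (1 - t^2)" using t2 by simp
    ultimately have "(1 - r^2)^2 \<le> (norm (x - p) * norm (y - p))^2" by linarith
    hence pr: "1 - r^2 \<le> norm (x - p) * norm (y - p)" by (rule power2_le_imp_le) simp
    have "norm (x - y) / sqrt (norm (x - p) * norm (y - p)) \<le> 2 * r / sqrt (1 - r^2)"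
      unfolding dxy using r0 r2 pr by (intro divide_left_mono real_sqrt_le_mono) auto
    thus "norm (x - y) / sqrt (norm (x - p) * norm (y - p)) \<le> 2 * r / sqrt (1 - r^2)" .
  qed
  have xin: "norm x < 1" "norm y < 1" using nx ny r1 by auto
  have xy: "x \<noteq> y" using dxy r0 by auto
  have hp: "0 < hyp_ball x y" using hyp_pos[OF xin xy] .
  have "cass_si (ball 0 1) x y \<le> ln (1 + 2*r/sqrt(1-r^2))"
    unfolding cass_eq using sle sB_nonneg[OF xin] by (intro ln_mono) auto
  hence "cass_si (ball 0 1) x y / hyp_ball x y \<le> ln (1 + 2*r/sqrt(1-r^2)) / hyp_ball x y"
    using hp by (intro divide_right_mono) auto
  moreover have hq: "hyp_ball x y = 2 * arsinh (2*r/(1-r^2))" unfolding hyp_eq aeq ..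
  ultimately have "cass_si (ball 0 1) x y / hyp_ball x y \<le> ln (1 + 2*r/sqrt(1-r^2)) / (2 * arsinh (2*r/(1-r^2)))"
    by simp
  thus ?thesis unfolding x_def y_def .
qed

lemma fam2:
  fixes e :: "'a::euclidean_space"
  assumes e: "norm e = 1" and h0: "0 < h" and h1: "h < 1/2"
  shows "ln (1 + h^2/sqrt(h*(h+h^2))) / (2 * arsinh (h^2/(sqrt(1-(1-h)^2) * sqrt(1-(1-h-h^2)^2))))
         \<le> cass_si (ball 0 1) ((1-h) *\<^sub>R e) ((1-h-h^2) *\<^sub>R e) / hyp_ball ((1-h) *\<^sub>R e) ((1-h-h^2) *\<^sub>R e)"
proof -
  define x where "x = (1-h) *\<^sub>R e"
  define y where "y = (1-h-h^2) *\<^sub>R e"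
  have hh: "h^2 < h" using h0 h1 by (simp add: power2_eq_square)
  have nx: "norm x = 1 - h" unfolding x_def using e h1 by simp
  have ny: "norm y = 1 - h - h^2" unfolding y_def using e h1 hh by simp
  have dxy: "norm (x - y) = h^2" unfolding x_def y_def
    by (simp add: scaleR_diff_left[symmetric] e)
  have dxe: "norm (x - e) = h" unfolding x_def
  proof -
    have "(1 - h) *\<^sub>R e - e = (-h) *\<^sub>R e" by (simp add: algebra_simps)
    thus "norm ((1 - h) *\<^sub>R e - e) = h" using e h0 by simp
  qed
  have dye: "norm (y - e) = h + h^2"
  proof -
    have "y - e = (1 - h - h^2) *\<^sub>R e - 1 *\<^sub>R e" unfolding y_def by simp
    also have "\<dots> = ((1 - h - h^2) - 1) *\<^sub>R e" by (rule scal_diff)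
    finally have "norm (y - e) = \<bar>(1 - h - h^2) - 1\<bar>" using e by simp
    also have "\<dots> = h + h^2" using h0 zero_le_power2[of h] by arith
    finally show ?thesis .
  qed
  have "0 \<le> h^2" by simp
  hence xin: "norm x < 1" "norm y < 1" using nx ny h0 by linarith+
  have "0 < h^2" using h0 by simp
  hence xy: "x \<noteq> y" using dxy by auto
  have hp: "0 < hyp_ball x y" using hyp_pos[OF xin xy] .
  have aeq: "hyp_ball x y = 2 * arsinh (h^2/(sqrt(1-(1-h)^2) * sqrt(1-(1-h-h^2)^2)))"
    unfolding hyp_eq aB_def nx ny dxy ..
  have S: "h^2/sqrt(h*(h+h^2)) \<le> sB x y" using sB_ge[OF xin e] unfolding dxy dxe dye .
  have S0: "0 \<le> h^2/sqrt(h*(h+h^2))" using h0 by simp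
  have "ln (1 + h^2/sqrt(h*(h+h^2))) \<le> cass_si (ball 0 1) x y"
    unfolding cass_eq using S S0 by (intro ln_mono) auto
  hence fin: "ln (1 + h^2/sqrt(h*(h+h^2))) / hyp_ball x y \<le> cass_si (ball 0 1) x y / hyp_ball x y"
    using hp by (intro divide_right_mono) auto
  have "ln (1 + h^2/sqrt(h*(h+h^2))) / (2 * arsinh (h^2/(sqrt(1-(1-h)^2) * sqrt(1-(1-h-h^2)^2))))
        = ln (1 + h^2/sqrt(h*(h+h^2))) / hyp_ball x y" by (simp only: aeq)
  also have "\<dots> \<le> cass_si (ball 0 1) x y / hyp_ball x y" by (rule fin)
  finally show ?thesis unfolding x_def y_def .
qed

lemma fam3:
  fixes e :: "'a::euclidean_space"
  assumes e: "norm e = 1" and u0: "0 < u" and u1: "u < 1/4"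
  shows "ln (5/2) - arsinh (3*u/(sqrt(1-(1-u)^2) * sqrt(1-(1-4*u)^2)))
         \<le> cass_si (ball 0 1) ((1-u) *\<^sub>R e) ((1-4*u) *\<^sub>R e) - hyp_ball ((1-u) *\<^sub>R e) ((1-4*u) *\<^sub>R e) / 2"
proof -
  define x where "x = (1-u) *\<^sub>R e"
  define y where "y = (1-4*u) *\<^sub>R e"
  have nx: "norm x = 1 - u" unfolding x_def using e u1 by simp
  have ny: "norm y = 1 - 4*u" unfolding y_def using e u1 by simp
  have dxy: "norm (x - y) = 3*u"
  proof -
    have "x - y = ((1 - u) - (1 - 4*u)) *\<^sub>R e" unfolding x_def y_def by (rule scal_diff)
    hence "norm (x - y) = \<bar>(1 - u) - (1 - 4*u)\<bar>" using e by simp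
    thus ?thesis using u0 by arith
  qed
  have dxe: "norm (x - e) = u" unfolding x_def
  proof -
    have "(1 - u) *\<^sub>R e - e = (-u) *\<^sub>R e" by (simp add: algebra_simps)
    thus "norm ((1 - u) *\<^sub>R e - e) = u" using e u0 by simp
  qed
  have dye: "norm (y - e) = 4*u" unfolding y_def
  proof -
    have "(1 - 4*u) *\<^sub>R e - e = (-(4*u)) *\<^sub>R e" by (simp add: algebra_simps)
    thus "norm ((1 - 4*u) *\<^sub>R e - e) = 4*u" using e u0 by simp
  qed
  have xin: "norm x < 1" "norm y < 1" using nx ny u0 by auto
  have aeq: "hyp_ball x y = 2 * arsinh (3*u/(sqrt(1-(1-u)^2) * sqrt(1-(1-4*u)^2)))"
    unfolding hyp_eq aB_def nx ny dxy ..
  have sq: "sqrt (u * (4 * u)) = 2 * u"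
  proof -
    have "sqrt (u * (4 * u)) = sqrt ((2 * u)^2)" by (rule arg_cong[where f=sqrt]) (simp add: power2_eq_square)
    also have "\<dots> = \<bar>2 * u\<bar>" by (rule real_sqrt_abs)
    also have "\<dots> = 2 * u" using u0 by simp
    finally show ?thesis .
  qed
  have S: "3/2 \<le> sB x y" using sB_ge[OF xin e] unfolding dxy dxe dye sq using u0 by simp
  have l52: "ln (5/2) \<le> cass_si (ball 0 1) x y"
    unfolding cass_eq using S by (subst ln_le_cancel_iff) auto
  have "ln (5/2) - arsinh (3*u/(sqrt(1-(1-u)^2) * sqrt(1-(1-4*u)^2))) = ln (5/2) - hyp_ball x y / 2"
    unfolding aeq by simp
  also have "\<dots> \<le> cass_si (ball 0 1) x y - hyp_ball x y / 2" using l52 by simp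
  finally show ?thesis unfolding x_def y_def .
qed

lemma arsinh_34: "arsinh (3/4 :: real) = ln 2"
proof -
  have "sqrt ((3/4::real)^2 + 1) = 5/4"
    by (rule real_sqrt_unique) (auto simp: power2_eq_square)
  thus ?thesis unfolding arsinh_real_def by simp
qed

lemma lim3': "((\<lambda>u::real. ln (5/2) - arsinh (3*u/(sqrt(1-(1-u)^2) * sqrt(1-(1-4*u)^2)))) \<longlongrightarrow> ln (5/4)) (at_right 0)"
proof -
  have "((\<lambda>u::real. ln (5/2) - arsinh (3*u/(sqrt(1-(1-u)^2) * sqrt(1-(1-4*u)^2)))) \<longlongrightarrow> ln (5/2) - arsinh (3/4)) (at_right 0)"
    by (intro tendsto_intros lim3)
  moreover have "ln (5/2) - arsinh (3/4) = ln (5/4::real)"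
    unfolding arsinh_34 using ln_div[of "5/2" 2] by simp
  ultimately show ?thesis by simp
qed



lemma mem_line:
  fixes e :: "'a::euclidean_space"
  assumes "norm e = 1" "\<bar>c\<bar> < 1"
  shows "c *\<^sub>R e \<in> ball 0 1"
  using assms by simp

lemma neq_line:
  fixes e :: "'a::euclidean_space"
  assumes "norm e = 1" "c \<noteq> d"
  shows "c *\<^sub>R e \<noteq> d *\<^sub>R e"
proof
  assume "c *\<^sub>R e = d *\<^sub>R e"
  hence "(c - d) *\<^sub>R e = 0" by (simp add: scaleR_left_diff_distrib)
  thus False using assms by auto
qed

theorem theorem4p1:
  assumes "DIM('a::euclidean_space) \<ge> 2"
  shows "(\<forall>x\<in>ball (0::'a) 1. \<forall>y\<in>ball 0 1.
            hyp_ball x y / 4 \<le> cass_si (ball 0 1) x y \<and>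
            cass_si (ball 0 1) x y \<le> hyp_ball x y \<and>
            cass_si (ball 0 1) x y \<le> hyp_ball x y / 2 + ln (5/4))
       \<and> Inf {cass_si (ball 0 1) x y / hyp_ball x y | x y :: 'a. x \<in> ball 0 1 \<and> y \<in> ball 0 1 \<and> x \<noteq> y} = 1/4
       \<and> Sup {cass_si (ball 0 1) x y / hyp_ball x y | x y :: 'a. x \<in> ball 0 1 \<and> y \<in> ball 0 1 \<and> x \<noteq> y} = 1
       \<and> Sup {cass_si (ball 0 1) x y - hyp_ball x y / 2 | x y :: 'a. x \<in> ball 0 1 \<and> y \<in> ball 0 1} = ln (5/4)"
proof -
  have I: "\<forall>x\<in>ball (0::'a) 1. \<forall>y\<in>ball 0 1.
            hyp_ball x y / 4 \<le> cass_si (ball 0 1) x y \<and>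
            cass_si (ball 0 1) x y \<le> hyp_ball x y \<and>
            cass_si (ball 0 1) x y \<le> hyp_ball x y / 2 + ln (5/4)"
  proof (intro ballI)
    fix x y :: 'a assume "x \<in> ball 0 1" "y \<in> ball 0 1"
    hence "norm x < 1" "norm y < 1" by auto
    thus "hyp_ball x y / 4 \<le> cass_si (ball 0 1) x y \<and>
            cass_si (ball 0 1) x y \<le> hyp_ball x y \<and>
            cass_si (ball 0 1) x y \<le> hyp_ball x y / 2 + ln (5/4)" by (rule ineqs)
  qed
  obtain e :: 'a where e: "norm e = 1" using unit_exists by blast
  define R where "R = {cass_si (ball 0 1) x y / hyp_ball x y | x y :: 'a. x \<in> ball 0 1 \<and> y \<in> ball 0 1 \<and> x \<noteq> y}"
  define D where "D = {cass_si (ball 0 1) x y - hyp_ball x y / 2 | x y :: 'a. x \<in> ball 0 1 \<and> y \<in> ball 0 1}"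
  have m0: "(0::real) *\<^sub>R e \<in> ball 0 1" "(1/2::real) *\<^sub>R e \<in> ball 0 1" using e by (auto intro: mem_line)
  have n0: "(0::real) *\<^sub>R e \<noteq> (1/2::real) *\<^sub>R e" by (rule neq_line[OF e]) simp
  have Rne: "R \<noteq> {}" unfolding R_def using m0 n0 by blast
  have Dne: "D \<noteq> {}" unfolding D_def using m0 by blast
  have Rmem: "\<And>z. z \<in> R \<Longrightarrow> \<exists>x y :: 'a. z = cass_si (ball 0 1) x y / hyp_ball x y \<and> norm x < 1 \<and> norm y < 1 \<and> x \<noteq> y"
  proof -
    fix z assume "z \<in> R"
    then obtain x y :: 'a where "z = cass_si (ball 0 1) x y / hyp_ball x y" "x \<in> ball 0 1" "y \<in> ball 0 1" "x \<noteq> y"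
      unfolding R_def by blast
    thus "\<exists>x y :: 'a. z = cass_si (ball 0 1) x y / hyp_ball x y \<and> norm x < 1 \<and> norm y < 1 \<and> x \<noteq> y"
      by (intro exI[of _ x] exI[of _ y]) auto
  qed
  have inR: "\<And>x y::'a. x \<in> ball 0 1 \<Longrightarrow> y \<in> ball 0 1 \<Longrightarrow> x \<noteq> y \<Longrightarrow> cass_si (ball 0 1) x y / hyp_ball x y \<in> R"
    unfolding R_def by blast
  have inD: "\<And>x y::'a. x \<in> ball 0 1 \<Longrightarrow> y \<in> ball 0 1 \<Longrightarrow> cass_si (ball 0 1) x y - hyp_ball x y / 2 \<in> D"
    unfolding D_def by blast
  have INF: "Inf R = 1/4"
  proof (rule cInf_eq_non_empty[OF Rne])
    fix z assume "z \<in> R"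
    then obtain x y :: 'a where z: "z = cass_si (ball 0 1) x y / hyp_ball x y"
      and xy: "norm x < 1" "norm y < 1" "x \<noteq> y" using Rmem by blast
    have hp: "0 < hyp_ball x y" using hyp_pos[OF xy] .
    have "hyp_ball x y / 4 \<le> cass_si (ball 0 1) x y" using ineqs[OF xy(1,2)] by simp
    thus "1/4 \<le> z" unfolding z using hp by (simp add: le_divide_eq)
  next
    fix w assume lb: "\<And>z. z \<in> R \<Longrightarrow> w \<le> z"
    have ev: "eventually (\<lambda>r. w \<le> ln (1 + 2*r/sqrt(1-r^2)) / (2 * arsinh (2*r/(1-r^2)))) (at_left (1::real))"
      using eventually_at_left_real[of 0 "1::real", OF zero_less_one]
    proof (rule eventually_mono)
      fix r :: real assume "r \<in> {0<..<1}"
      hence r: "0 < r" "r < 1" by auto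
      have m1: "-(r *\<^sub>R e) \<in> ball 0 1" "r *\<^sub>R e \<in> ball 0 1" using e r by auto
      have "(-r) *\<^sub>R e \<noteq> r *\<^sub>R e" by (rule neq_line[OF e]) (use r in simp)
      hence "-(r *\<^sub>R e) \<noteq> r *\<^sub>R e" by simp
      hence "cass_si (ball 0 1) (-(r *\<^sub>R e)) (r *\<^sub>R e) / hyp_ball (-(r *\<^sub>R e)) (r *\<^sub>R e) \<in> R"
        using m1 by (intro inR)
      hence "w \<le> cass_si (ball 0 1) (-(r *\<^sub>R e)) (r *\<^sub>R e) / hyp_ball (-(r *\<^sub>R e)) (r *\<^sub>R e)" by (rule lb)
      also have "\<dots> \<le> ln (1 + 2*r/sqrt(1-r^2)) / (2 * arsinh (2*r/(1-r^2)))" by (rule fam1[OF e r])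
      finally show "w \<le> ln (1 + 2*r/sqrt(1-r^2)) / (2 * arsinh (2*r/(1-r^2)))" .
    qed
    show "w \<le> 1/4" by (rule tendsto_lowerbound[OF lim1 ev]) simp
  qed
  have SUP1: "Sup R = 1"
  proof (rule cSup_eq_non_empty[OF Rne])
    fix z assume "z \<in> R"
    then obtain x y :: 'a where z: "z = cass_si (ball 0 1) x y / hyp_ball x y"
      and xy: "norm x < 1" "norm y < 1" "x \<noteq> y" using Rmem by blast
    have hp: "0 < hyp_ball x y" using hyp_pos[OF xy] .
    have "cass_si (ball 0 1) x y \<le> hyp_ball x y" using ineqs[OF xy(1,2)] by simp
    thus "z \<le> 1" unfolding z using hp by simp
  next
    fix w assume ub: "\<And>z. z \<in> R \<Longrightarrow> z \<le> w"
    have ev: "eventually (\<lambda>h. ln (1 + h^2/sqrt(h*(h+h^2))) / (2 * arsinh (h^2/(sqrt(1-(1-h)^2) * sqrt(1-(1-h-h^2)^2)))) \<le> w) (at_right (0::real))"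
      using eventually_at_right_real[of 0 "1/2::real", OF half_gt_zero[OF zero_less_one]]
    proof (rule eventually_mono)
      fix h :: real assume "h \<in> {0<..<1/2}"
      hence h: "0 < h" "h < 1/2" by auto
      have hh: "0 < h^2" "h^2 < h" using h by (auto simp: power2_eq_square)
      have a1: "\<bar>1-h\<bar> < 1" "\<bar>1-h-h^2\<bar> < 1" using h hh by arith+
      have "(1-h) *\<^sub>R e \<in> ball 0 1" "(1-h-h^2) *\<^sub>R e \<in> ball 0 1" using mem_line[OF e a1(1)] mem_line[OF e a1(2)] .
      moreover have "(1-h) *\<^sub>R e \<noteq> (1-h-h^2) *\<^sub>R e" by (rule neq_line[OF e]) (use hh in simp)
      ultimately have "cass_si (ball 0 1) ((1-h) *\<^sub>R e) ((1-h-h^2) *\<^sub>R e) / hyp_ball ((1-h) *\<^sub>R e) ((1-h-h^2) *\<^sub>R e) \<in> R"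
        by (intro inR)
      hence le: "cass_si (ball 0 1) ((1-h) *\<^sub>R e) ((1-h-h^2) *\<^sub>R e) / hyp_ball ((1-h) *\<^sub>R e) ((1-h-h^2) *\<^sub>R e) \<le> w" by (rule ub)
      show "ln (1 + h^2/sqrt(h*(h+h^2))) / (2 * arsinh (h^2/(sqrt(1-(1-h)^2) * sqrt(1-(1-h-h^2)^2)))) \<le> w"
        using fam2[OF e h] le by linarith
    qed
    show "1 \<le> w" by (rule tendsto_upperbound[OF lim2 ev]) simp
  qed
  have SUP2: "Sup D = ln (5/4)"
  proof (rule cSup_eq_non_empty[OF Dne])
    fix z assume "z \<in> D"
    then obtain x y :: 'a where z: "z = cass_si (ball 0 1) x y - hyp_ball x y / 2"
      and xy: "norm x < 1" "norm y < 1" unfolding D_def by auto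
    show "z \<le> ln (5/4)" unfolding z using ineqs[OF xy] by simp
  next
    fix w assume ub: "\<And>z. z \<in> D \<Longrightarrow> z \<le> w"
    have ev: "eventually (\<lambda>u. ln (5/2) - arsinh (3*u/(sqrt(1-(1-u)^2) * sqrt(1-(1-4*u)^2))) \<le> w) (at_right (0::real))"
      using eventually_at_right_real[of 0 "1/4::real", OF divide_pos_pos[OF zero_less_one zero_less_numeral]]
    proof (rule eventually_mono)
      fix u :: real assume "u \<in> {0<..<1/4}"
      hence u: "0 < u" "u < 1/4" by auto
      have a1: "\<bar>1-u\<bar> < 1" "\<bar>1-4*u\<bar> < 1" using u by arith+
      have "(1-u) *\<^sub>R e \<in> ball 0 1" "(1-4*u) *\<^sub>R e \<in> ball 0 1" using mem_line[OF e a1(1)] mem_line[OF e a1(2)] .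
      hence "cass_si (ball 0 1) ((1-u) *\<^sub>R e) ((1-4*u) *\<^sub>R e) - hyp_ball ((1-u) *\<^sub>R e) ((1-4*u) *\<^sub>R e) / 2 \<in> D"
        by (intro inD)
      hence le: "cass_si (ball 0 1) ((1-u) *\<^sub>R e) ((1-4*u) *\<^sub>R e) - hyp_ball ((1-u) *\<^sub>R e) ((1-4*u) *\<^sub>R e) / 2 \<le> w" by (rule ub)
      show "ln (5/2) - arsinh (3*u/(sqrt(1-(1-u)^2) * sqrt(1-(1-4*u)^2))) \<le> w"
        using fam3[OF e u] le by linarith
    qed
    show "ln (5/4) \<le> w" by (rule tendsto_upperbound[OF lim3' ev]) simp
  qed
  show ?thesis using I INF SUP1 SUP2 unfolding R_def D_def by blast
qed

end
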